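(* Let $\Phi:(0,1]\to\mathbb R$ be measurable with $\delta_\Phi(X_1,X_2)=\ln Z_2-\Phi(T)$, $T=Z_1/Z_2$, having finite risk, and let $\Phi_*(t)=\psi(2\alpha)-\ln(1+t)$, $t\in(0,1]$. Suppose $\mathbb P_{\underline\theta}(\Phi(T)>\Phi_*(T))>0$ for some $\underline\theta\in\Theta$. Define $$\Phi_I(t)=\begin{cases}\psi(2\alpha)-\ln(1+t), & \text{if } \Phi(t)>\psi(2\alpha)-\ln(1+t),\\ \Phi(t), & \text{otherwise.}\end{cases}$$ Then $\delta_{\Phi_I}(X_1,X_2)=\ln Z_2-\Phi_I(T)$ dominates $\delta_\Phi$ for estimating $H_S(\underline\theta)$ under squared error loss, i.e. $R(\underline\theta,\delta_{\Phi_I})\le R(\underline\theta,\delta_\Phi)$ for all $\underline\theta\in\Theta$ with strict inequality for some $\underline\theta$.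
   Context: Fix a known $\alpha>0$. $X_1,X_2$ are independent, $X_i$ having density $f(x\mid\theta_i)=\frac{x^{\alpha-1}e^{-x/\theta_i}}{\Gamma(\alpha)\theta_i^{\alpha}}$, $x>0$, with unknown $\underline\theta=(\theta_1,\theta_2)\in\Theta=(0,\infty)^2$. $Z_1=\min\{X_1,X_2\}$, $Z_2=\max\{X_1,X_2\}$. $H_S(\underline\theta)=\ln\theta_1\, I(X_1\ge X_2)+\ln\theta_2\, I(X_1<X_2)$. $\psi$ is the digamma function. Risk: $R(\underline\theta,\delta)=\mathbb E_{\underline\theta}(\delta(X_1,X_2)-H_S(\underline\theta))^2$. *)

theory Defs
  imports "HOL-Probability.Probability"
begin

definition gamma_dens :: "real \<Rightarrow> real \<Rightarrow> real \<Rightarrow> real" where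
  "gamma_dens \<alpha> \<theta> x =
     (if 0 < x then x powr (\<alpha> - 1) * exp (- x / \<theta>) / (Gamma \<alpha> * \<theta> powr \<alpha>) else 0)"

definition joint :: "real \<Rightarrow> real \<Rightarrow> real \<Rightarrow> (real \<times> real) measure" where
  "joint \<alpha> \<theta>1 \<theta>2 =
     density (lborel \<Otimes>\<^sub>M lborel)
       (\<lambda>(x1, x2). ennreal (gamma_dens \<alpha> \<theta>1 x1 * gamma_dens \<alpha> \<theta>2 x2))"

definition Z1 :: "real \<times> real \<Rightarrow> real" where "Z1 = (\<lambda>(x1, x2). min x1 x2)"
definition Z2 :: "real \<times> real \<Rightarrow> real" where "Z2 = (\<lambda>(x1, x2). max x1 x2)"
definition T :: "real \<times> real \<Rightarrow> real" where "T \<omega> = Z1 \<omega> / Z2 \<omega>"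

definition H_S :: "real \<Rightarrow> real \<Rightarrow> real \<times> real \<Rightarrow> real" where
  "H_S \<theta>1 \<theta>2 = (\<lambda>(x1, x2). ln \<theta>1 * (if x1 \<ge> x2 then 1 else 0)
                              + ln \<theta>2 * (if x1 < x2 then 1 else 0))"

definition risk :: "real \<Rightarrow> real \<Rightarrow> real \<Rightarrow> (real \<times> real \<Rightarrow> real) \<Rightarrow> real" where
  "risk \<alpha> \<theta>1 \<theta>2 \<delta> = (\<integral>\<omega>. (\<delta> \<omega> - H_S \<theta>1 \<theta>2 \<omega>)\<^sup>2 \<partial>joint \<alpha> \<theta>1 \<theta>2)"

definition finite_risk :: "real \<Rightarrow> real \<Rightarrow> real \<Rightarrow> (real \<times> real \<Rightarrow> real) \<Rightarrow> bool" where
  "finite_risk \<alpha> \<theta>1 \<theta>2 \<delta> \<longleftrightarrow>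
     integrable (joint \<alpha> \<theta>1 \<theta>2) (\<lambda>\<omega>. (\<delta> \<omega> - H_S \<theta>1 \<theta>2 \<omega>)\<^sup>2)"

definition delta :: "(real \<Rightarrow> real) \<Rightarrow> real \<times> real \<Rightarrow> real" where
  "delta \<Phi> \<omega> = ln (Z2 \<omega>) - \<Phi> (T \<omega>)"

definition Phi_star :: "real \<Rightarrow> real \<Rightarrow> real" where
  "Phi_star \<alpha> t = Digamma (2 * \<alpha>) - ln (1 + t)"

definition Phi_I :: "real \<Rightarrow> (real \<Rightarrow> real) \<Rightarrow> real \<Rightarrow> real" where
  "Phi_I \<alpha> \<Phi> t = (if \<Phi> t > Digamma (2 * \<alpha>) - ln (1 + t)
                     then Digamma (2 * \<alpha>) - ln (1 + t) else \<Phi> t)"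

end

theory Submission
  imports Defs
begin


lemma gamma_nn:
  fixes s l :: real
  assumes s: "0 < s" and l: "0 < l"
  shows "(\<integral>\<^sup>+x. ennreal (indicator {0<..} x * x powr (s-1) * exp (-(l*x))) \<partial>lborel)
         = ennreal (Gamma s * l powr (-s))"
proof -
  have G: "Gamma s = (\<integral>\<^sup>+x. ennreal (indicator {0<..} x * x powr (s-1) * exp (-x)) \<partial>lborel)"
    unfolding Gamma_conv_nn_integral_real[OF s]
    by (intro nn_integral_cong) (auto simp: indicator_def exp_minus field_simps)
  have "(\<integral>\<^sup>+x. ennreal (indicator {0<..} x * x powr (s-1) * exp (-(l*x))) \<partial>lborel)
      = ennreal \<bar>1/l\<bar> * (\<integral>\<^sup>+x. ennreal (indicator {0<..} (0 + (1/l)*x) * (0 + (1/l)*x) powr (s-1) * exp (-(l*(0 + (1/l)*x)))) \<partial>lborel)"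
    by (rule nn_integral_real_affine) (use l in auto)
  also have "\<dots> = ennreal (1/l) * (\<integral>\<^sup>+x. ennreal (l powr (1-s)) * ennreal (indicator {0<..} x * x powr (s-1) * exp (-x)) \<partial>lborel)"
  proof -
    have "\<And>x. ennreal (indicator {0<..} (0 + (1/l)*x) * (0 + (1/l)*x) powr (s-1) * exp (-(l*(0 + (1/l)*x))))
       = ennreal (l powr (1-s)) * ennreal (indicator {0<..} x * x powr (s-1) * exp (-x))"
    proof -
      fix x :: real
      show "?thesis x"
      proof (cases "x > 0")
        case True
        have "(x/l) powr (s-1) = l powr (1-s) * x powr (s-1)"
          using True l by (simp add: powr_divide powr_add[symmetric] divide_simps)
        then show ?thesis using True l
          by (simp add: ennreal_mult[symmetric] field_simps)
      next
        case False
        then have "\<not> x/l > 0" using l by (simp add: zero_less_divide_iff)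
        then show ?thesis using False by (simp add: indicator_def)
      qed
    qed
    then show ?thesis using l by simp
  qed
  also have "\<dots> = ennreal (1/l) * (ennreal (l powr (1-s)) * Gamma s)"
    by (subst nn_integral_cmult) (auto simp: G)
  also have "\<dots> = ennreal (Gamma s * l powr (-s))"
    using l s by (simp add: ennreal_mult[symmetric] Gamma_real_pos powr_diff powr_minus field_simps)
  finally show ?thesis .
qed

lemma gamma_hbi:
  fixes s l :: real
  assumes s: "0 < s" and l: "0 < l"
  shows "has_bochner_integral lborel (\<lambda>x. indicator {0<..} x * x powr (s-1) * exp (-(l*x))) (Gamma s * l powr (-s))"
  by (rule has_bochner_integral_nn_integral) (use s l gamma_nn[OF s l] in \<open>auto simp: Gamma_real_pos\<close>)

lemma gamma_int:
  fixes s l :: real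
  assumes s: "0 < s" and l: "0 < l"
  shows "integrable lborel (\<lambda>x. indicator {0<..} x * x powr (s-1) * exp (-(l*x)))"
    and "(\<integral>x. indicator {0<..} x * x powr (s-1) * exp (-(l*x)) \<partial>lborel) = Gamma s * l powr (-s)"
  using gamma_hbi[OF s l] by (auto simp: has_bochner_integral_iff)

lemma ln_bound:
  fixes x d :: real
  assumes x: "0 < x" and d: "0 < d"
  shows "\<bar>ln x\<bar> \<le> (x powr d + x powr (-d)) / d"
proof (cases "x \<ge> 1")
  case True
  have "ln (x powr d) \<le> x powr d - 1" using x by (intro ln_le_minus_one) auto
  then have "d * ln x \<le> x powr d" using x by (simp add: ln_powr)
  then have "ln x \<le> x powr d / d" using d by (simp add: field_simps)
  moreover have "0 \<le> ln x" using True by simp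
  moreover have "0 \<le> x powr (-d) / d" using d by simp
  ultimately show ?thesis by (simp add: add_divide_distrib)
next
  case False
  have "ln (x powr (-d)) \<le> x powr (-d) - 1" using x by (intro ln_le_minus_one) auto
  then have "- d * ln x \<le> x powr (-d)" using x by (simp add: ln_powr)
  then have "- ln x \<le> x powr (-d) / d" using d by (simp add: field_simps)
  moreover have "ln x \<le> 0" using False x by simp
  moreover have "0 \<le> x powr d / d" using d by simp
  ultimately show ?thesis by (simp add: add_divide_distrib)
qed

lemma exp_minus_one_bound:
  fixes u :: real
  shows "\<bar>exp u - 1\<bar> \<le> \<bar>u\<bar> * exp \<bar>u\<bar>"
proof (cases "u \<ge> 0")
  case True
  have "1 - u \<le> exp (-u)" using exp_ge_add_one_self[of "-u"] by simp
  then have "(1 - u) * exp u \<le> exp (-u) * exp u" by (intro mult_right_mono) auto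
  then have "exp u - u * exp u \<le> 1" by (simp add: exp_minus field_simps)
  then show ?thesis using True by simp
next
  case False
  have "1 + u \<le> exp u" using exp_ge_add_one_self[of u] by simp
  moreover have "exp u \<le> 1" using False by simp
  moreover have "1 \<le> exp \<bar>u\<bar>" by simp
  ultimately have "\<bar>exp u - 1\<bar> \<le> \<bar>u\<bar>" using False by linarith
  also have "\<dots> \<le> \<bar>u\<bar> * exp \<bar>u\<bar>" using \<open>1 \<le> exp \<bar>u\<bar>\<close> by (simp add: mult_le_cancel_left1)
  finally show ?thesis .
qed

lemma powr_quot_bound:
  fixes x h d :: real
  assumes x: "0 < x" and h: "\<bar>h\<bar> \<le> d"
  shows "\<bar>x powr h - 1\<bar> \<le> \<bar>h\<bar> * (\<bar>ln x\<bar> * (x powr d + x powr (-d)))"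
proof -
  have "\<bar>x powr h - 1\<bar> = \<bar>exp (h * ln x) - 1\<bar>" using x by (simp add: powr_def mult.commute)
  also have "\<dots> \<le> \<bar>h * ln x\<bar> * exp \<bar>h * ln x\<bar>" by (rule exp_minus_one_bound)
  also have "exp \<bar>h * ln x\<bar> \<le> x powr d + x powr (-d)"
  proof -
    have "\<bar>h * ln x\<bar> \<le> d * \<bar>ln x\<bar>" using h by (simp add: abs_mult mult_right_mono)
    then have "exp \<bar>h * ln x\<bar> \<le> exp (d * \<bar>ln x\<bar>)" by simp
    also have "exp (d * \<bar>ln x\<bar>) \<le> x powr d + x powr (-d)"
    proof (cases "ln x \<ge> 0")
      case True
      then have "exp (d * \<bar>ln x\<bar>) = x powr d" using x by (simp add: powr_def mult.commute)
      then show ?thesis by simp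
    next
      case False
      then have "exp (d * \<bar>ln x\<bar>) = x powr (-d)" using x by (simp add: powr_def mult.commute)
      then show ?thesis by simp
    qed
    finally show ?thesis .
  qed
  then have "\<bar>h * ln x\<bar> * exp \<bar>h * ln x\<bar> \<le> \<bar>h * ln x\<bar> * (x powr d + x powr (-d))"
    by (intro mult_left_mono) auto
  finally show ?thesis by (simp add: abs_mult mult.assoc)
qed

lemma dom_int:
  fixes s l d :: real
  assumes s: "0 < s" and l: "0 < l" and d: "0 < d" "2*d < s"
  shows "integrable lborel (\<lambda>x. indicator {0<..} x * x powr (s-1) * exp (-(l*x)) * (x powr d + x powr (-d))\<^sup>2)"
proof -
  have "integrable lborel (\<lambda>x. indicator {0<..} x * x powr ((s+2*d)-1) * exp (-(l*x))
        + 2 * (indicator {0<..} x * x powr (s-1) * exp (-(l*x)))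
        + indicator {0<..} x * x powr ((s-2*d)-1) * exp (-(l*x)))"
  proof -
    have i1: "integrable lborel (\<lambda>x. indicator {0<..} x * x powr ((s+2*d)-1) * exp (-(l*x)))"
      using s d l by (intro gamma_int) auto
    have i2: "integrable lborel (\<lambda>x. indicator {0<..} x * x powr (s-1) * exp (-(l*x)))"
      using s d l by (intro gamma_int) auto
    have i3: "integrable lborel (\<lambda>x. indicator {0<..} x * x powr ((s-2*d)-1) * exp (-(l*x)))"
      using s d l by (intro gamma_int) auto
    show ?thesis using i1 i2 i3 by auto
  qed
  moreover have "(\<lambda>x. indicator {0<..} x * x powr ((s+2*d)-1) * exp (-(l*x))
        + 2 * (indicator {0<..} x * x powr (s-1) * exp (-(l*x)))
        + indicator {0<..} x * x powr ((s-2*d)-1) * exp (-(l*x)))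
        = (\<lambda>x. indicator {0<..} x * x powr (s-1) * exp (-(l*x)) * (x powr d + x powr (-d))\<^sup>2)"
  proof
    fix x :: real
    show "indicator {0<..} x * x powr ((s+2*d)-1) * exp (-(l*x))
        + 2 * (indicator {0<..} x * x powr (s-1) * exp (-(l*x)))
        + indicator {0<..} x * x powr ((s-2*d)-1) * exp (-(l*x))
        = indicator {0<..} x * x powr (s-1) * exp (-(l*x)) * (x powr d + x powr (-d))\<^sup>2"
    proof (cases "x > 0")
      case True
      have e1: "x powr ((s+2*d)-1) = x powr (s-1) * (x powr d * x powr d)"
        using True by (simp add: powr_add[symmetric]; simp add: algebra_simps)
      have e2: "x powr ((s-2*d)-1) = x powr (s-1) * (x powr (-d) * x powr (-d))"
        using True by (simp add: powr_add[symmetric]; simp add: algebra_simps)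
      have e3: "x powr d * x powr (-d) = 1" using True by (simp add: powr_add[symmetric])
      show ?thesis using True unfolding e1 e2 power2_eq_square
        by (simp add: algebra_simps e3)
    qed simp
  qed
  ultimately show ?thesis by simp
qed

lemma log_moment:
  fixes s l :: real
  assumes s: "0 < s" and l: "0 < l"
  shows "has_bochner_integral lborel (\<lambda>x. indicator {0<..} x * x powr (s-1) * exp (-(l*x)) * ln x)
           (Gamma s * l powr (-s) * (Digamma s - ln l))"
proof -
  define g where "g a x = indicator {0<..} x * x powr (a-1) * exp (-(l*x))" for a x :: real
  define F where "F x = g s x * ln x" for x
  define S where "S u x = g s x * ((x powr (1/u) - 1) * u)" for u x :: real
  define d where "d = s/4"
  define w where "w x = g s x * (x powr d + x powr (-d))\<^sup>2 / d" for x
  have d: "0 < d" "2*d < s" using s by (auto simp: d_def)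
  have gm[measurable]: "g a \<in> borel_measurable lborel" for a unfolding g_def by measurable
  have Fm[measurable]: "F \<in> borel_measurable lborel" unfolding F_def by measurable
  have Sm[measurable]: "S u \<in> borel_measurable lborel" for u unfolding S_def by measurable
  have wi: "integrable lborel w"
    unfolding w_def g_def using dom_int[OF s l d] by (intro integrable_divide) auto
  have lim: "AE x in lborel. ((\<lambda>u. S u x) \<longlongrightarrow> F x) at_top"
  proof (intro AE_I2)
    fix x :: real
    show "((\<lambda>u. S u x) \<longlongrightarrow> F x) at_top"
    proof (cases "x > 0")
      case False
      then show ?thesis by (simp add: S_def F_def g_def)
    next
      case True
      have D: "((\<lambda>h. x powr h) has_field_derivative ln x) (at 0)"
      proof -
        have "((\<lambda>h. exp (h * ln x)) has_field_derivative exp (0 * ln x) * ln x) (at 0)"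
          by (auto intro!: derivative_eq_intros)
        moreover have "(\<lambda>h. x powr h) = (\<lambda>h. exp (h * ln x))" using True by (auto simp: powr_def mult.commute)
        ultimately show ?thesis by simp
      qed
      then have "((\<lambda>h. (x powr (0 + h) - x powr 0) / h) \<longlongrightarrow> ln x) (at 0)"
        by (simp add: DERIV_def)
      then have L0: "((\<lambda>h. (x powr h - 1) / h) \<longlongrightarrow> ln x) (at_right 0)"
        using True by (auto intro: tendsto_mono[OF at_le])
      have "((\<lambda>u. (x powr (inverse u) - 1) / inverse u) \<longlongrightarrow> ln x) at_top"
        by (rule filterlim_compose[OF L0 filterlim_inverse_at_right_top])
      then have "((\<lambda>u. (x powr (1/u) - 1) * u) \<longlongrightarrow> ln x) at_top"
        by (simp add: inverse_eq_divide)
      then show ?thesis unfolding S_def F_def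
        by (intro tendsto_mult tendsto_const)
    qed
  qed
  have bound: "\<forall>\<^sub>F u in at_top. AE x in lborel. norm (S u x) \<le> w x"
  proof -
    have "\<forall>\<^sub>F u in at_top. u \<ge> 1/d" by (rule eventually_ge_at_top)
    then show ?thesis
    proof eventually_elim
      case (elim u)
      have u: "0 < u" using elim d(1) by (smt (verit) divide_pos_pos)
      have hu: "\<bar>1/u\<bar> \<le> d" using elim u d by (simp add: field_simps)
      show ?case
      proof (intro AE_I2)
        fix x :: real
        show "norm (S u x) \<le> w x"
        proof (cases "x > 0")
          case False
          then show ?thesis by (simp add: S_def w_def g_def)
        next
          case True
          have gpos: "0 \<le> g s x" unfolding g_def by simp
          have "\<bar>(x powr (1/u) - 1) * u\<bar> \<le> \<bar>1/u\<bar> * (\<bar>ln x\<bar> * (x powr d + x powr (-d))) * u"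
            using powr_quot_bound[OF True hu] u by (simp add: abs_mult pos_le_divide_eq)
          also have "\<dots> = \<bar>ln x\<bar> * (x powr d + x powr (-d))" using u by simp
          also have "\<dots> \<le> ((x powr d + x powr (-d)) / d) * (x powr d + x powr (-d))"
            by (intro mult_right_mono ln_bound True d) auto
          also have "\<dots> = (x powr d + x powr (-d))\<^sup>2 / d" by (simp add: power2_eq_square)
          finally have "\<bar>(x powr (1/u) - 1) * u\<bar> \<le> (x powr d + x powr (-d))\<^sup>2 / d" .
          then have "g s x * \<bar>(x powr (1/u) - 1) * u\<bar> \<le> g s x * ((x powr d + x powr (-d))\<^sup>2 / d)"
            by (intro mult_left_mono gpos)
          then show ?thesis using gpos by (simp add: S_def w_def abs_mult)
        qed
      qed
    qed
  qed
  have lim1: "((\<lambda>u. integral\<^sup>L lborel (S u)) \<longlongrightarrow> integral\<^sup>L lborel F) at_top"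
    by (rule integral_dominated_convergence_at_top[OF Fm Sm wi lim bound])
  have Fi: "integrable lborel F"
    by (rule integrable_dominated_convergence_at_top[OF Fm Sm wi lim bound])
  define G where "G a = Gamma a * exp (- (a * ln l))" for a
  have Gl: "G a = Gamma a * l powr (-a)" for a using l by (simp add: G_def powr_def)
  have DG: "(G has_field_derivative (Gamma s * Digamma s * exp (- (s * ln l)) + Gamma s * (exp (- (s * ln l)) * (- ln l)))) (at s)"
    unfolding G_def using s
    by (auto intro!: derivative_eq_intros simp: nonpos_Ints_def)
  have "((\<lambda>h. (G (s + h) - G s) / h) \<longlongrightarrow> Gamma s * l powr (-s) * (Digamma s - ln l)) (at 0)"
    using DG[unfolded DERIV_def] l by (simp add: powr_def algebra_simps)
  then have "((\<lambda>h. (G (s + h) - G s) / h) \<longlongrightarrow> Gamma s * l powr (-s) * (Digamma s - ln l)) (at_right 0)"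
    by (auto intro: tendsto_mono[OF at_le])
  from filterlim_compose[OF this filterlim_inverse_at_right_top]
  have lim2': "((\<lambda>u. (G (s + 1/u) - G s) * u) \<longlongrightarrow> Gamma s * l powr (-s) * (Digamma s - ln l)) at_top"
    by (simp add: inverse_eq_divide)
  have ev: "\<forall>\<^sub>F u in at_top. (G (s + 1/u) - G s) * u = integral\<^sup>L lborel (S u)"
  proof -
    have "\<forall>\<^sub>F u in at_top. u > (0::real)" by (rule eventually_gt_at_top)
    then show ?thesis
    proof eventually_elim
      case (elim u)
      have i1: "integrable lborel (g (s + 1/u))" "integral\<^sup>L lborel (g (s + 1/u)) = Gamma (s+1/u) * l powr (-(s+1/u))"
      proof -
        have "0 < s + 1/u" using elim s by (simp add: add_pos_pos)
        then show "integrable lborel (g (s + 1/u))" "integral\<^sup>L lborel (g (s + 1/u)) = Gamma (s+1/u) * l powr (-(s+1/u))"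
          unfolding g_def using gamma_int[OF _ l] by auto
      qed
      have i2: "integrable lborel (g s)" "integral\<^sup>L lborel (g s) = Gamma s * l powr (-s)"
        unfolding g_def using gamma_int[of s l] s l by auto
      have "S u = (\<lambda>x. (g (s + 1/u) x - g s x) * u)"
      proof
        fix x :: real
        show "S u x = (g (s + 1/u) x - g s x) * u"
        proof (cases "x > 0")
          case True
          have "x powr (s + 1/u - 1) = x powr (s-1) * x powr (1/u)"
            using True by (simp add: powr_add[symmetric]; simp add: algebra_simps)
          then show ?thesis by (simp add: S_def g_def algebra_simps)
        qed (simp add: S_def g_def)
      qed
      then have "integral\<^sup>L lborel (S u) = (integral\<^sup>L lborel (g (s + 1/u)) - integral\<^sup>L lborel (g s)) * u"
        using i1 i2 by simp
      then show ?case using i1 i2 by (simp add: Gl)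
    qed
  qed
  have lim2: "((\<lambda>u. integral\<^sup>L lborel (S u)) \<longlongrightarrow> Gamma s * l powr (-s) * (Digamma s - ln l)) at_top"
    using tendsto_cong[OF ev] lim2' by simp
  have "integral\<^sup>L lborel F = Gamma s * l powr (-s) * (Digamma s - ln l)"
    using tendsto_unique[OF _ lim1 lim2] by simp
  with Fi show ?thesis unfolding F_def g_def by (simp add: has_bochner_integral_iff)
qed



lemma core1:
  fixes K :: "real \<times> real \<Rightarrow> ennreal"
  assumes Km[measurable]: "K \<in> borel_measurable (lborel \<Otimes>\<^sub>M lborel)"
  shows "(\<integral>\<^sup>+\<omega>. indicator {0<..} (fst \<omega>) * K \<omega> \<partial>(lborel \<Otimes>\<^sub>M lborel))
       = (\<integral>\<^sup>+t. \<integral>\<^sup>+x. indicator {0<..} x * ennreal x * K (x, t*x) \<partial>lborel \<partial>lborel)"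
proof -
  have "(\<integral>\<^sup>+\<omega>. indicator {0<..} (fst \<omega>) * K \<omega> \<partial>(lborel \<Otimes>\<^sub>M lborel))
      = (\<integral>\<^sup>+x1. \<integral>\<^sup>+x2. indicator {0<..} x1 * K (x1, x2) \<partial>lborel \<partial>lborel)"
    by (subst lborel.nn_integral_fst[symmetric]) auto
  also have "\<dots> = (\<integral>\<^sup>+x1. \<integral>\<^sup>+t. indicator {0<..} x1 * ennreal x1 * K (x1, t*x1) \<partial>lborel \<partial>lborel)"
  proof (rule nn_integral_cong)
    fix x1 :: real
    show "(\<integral>\<^sup>+x2. indicator {0<..} x1 * K (x1, x2) \<partial>lborel) = (\<integral>\<^sup>+t. indicator {0<..} x1 * ennreal x1 * K (x1, t*x1) \<partial>lborel)"
    proof (cases "x1 > 0")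
      case True
      have "(\<integral>\<^sup>+x2. K (x1, x2) \<partial>lborel) = ennreal \<bar>x1\<bar> * (\<integral>\<^sup>+t. K (x1, 0 + x1 * t) \<partial>lborel)"
        by (rule nn_integral_real_affine) (use True in auto)
      then show ?thesis using True
        by (simp add: nn_integral_cmult mult.assoc mult.commute)
    qed simp
  qed
  also have "\<dots> = (\<integral>\<^sup>+t. \<integral>\<^sup>+x1. indicator {0<..} x1 * ennreal x1 * K (x1, t*x1) \<partial>lborel \<partial>lborel)"
    by (rule lborel_pair.Fubini'[symmetric]) (simp add: case_prod_unfold)
  finally show ?thesis .
qed

lemma core2:
  fixes K :: "real \<times> real \<Rightarrow> ennreal"
  assumes Km[measurable]: "K \<in> borel_measurable (lborel \<Otimes>\<^sub>M lborel)"
  shows "(\<integral>\<^sup>+\<omega>. indicator {0<..} (snd \<omega>) * K \<omega> \<partial>(lborel \<Otimes>\<^sub>M lborel))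
       = (\<integral>\<^sup>+t. \<integral>\<^sup>+x. indicator {0<..} x * ennreal x * K (t*x, x) \<partial>lborel \<partial>lborel)"
proof -
  have "(\<integral>\<^sup>+\<omega>. indicator {0<..} (snd \<omega>) * K \<omega> \<partial>(lborel \<Otimes>\<^sub>M lborel))
      = (\<integral>\<^sup>+x2. \<integral>\<^sup>+x1. indicator {0<..} x2 * K (x1, x2) \<partial>lborel \<partial>lborel)"
    by (subst lborel_pair.nn_integral_snd[symmetric]) auto
  also have "\<dots> = (\<integral>\<^sup>+x2. \<integral>\<^sup>+t. indicator {0<..} x2 * ennreal x2 * K (t*x2, x2) \<partial>lborel \<partial>lborel)"
  proof (rule nn_integral_cong)
    fix x2 :: real
    show "(\<integral>\<^sup>+x1. indicator {0<..} x2 * K (x1, x2) \<partial>lborel) = (\<integral>\<^sup>+t. indicator {0<..} x2 * ennreal x2 * K (t*x2, x2) \<partial>lborel)"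
    proof (cases "x2 > 0")
      case True
      have "(\<integral>\<^sup>+x1. K (x1, x2) \<partial>lborel) = ennreal \<bar>x2\<bar> * (\<integral>\<^sup>+t. K (0 + x2 * t, x2) \<partial>lborel)"
        by (rule nn_integral_real_affine) (use True in auto)
      then show ?thesis using True
        by (simp add: nn_integral_cmult mult.assoc mult.commute)
    qed simp
  qed
  also have "\<dots> = (\<integral>\<^sup>+t. \<integral>\<^sup>+x2. indicator {0<..} x2 * ennreal x2 * K (t*x2, x2) \<partial>lborel \<partial>lborel)"
    by (rule lborel_pair.Fubini'[symmetric]) (simp add: case_prod_unfold)
  finally show ?thesis .
qed



lemma gamma_dens_meas[measurable]: "gamma_dens a th \<in> borel_measurable borel"
  unfolding gamma_dens_def by measurable

lemma gamma_dens_nonneg: "0 < a \<Longrightarrow> 0 < th \<Longrightarrow> 0 \<le> gamma_dens a th x"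
  unfolding gamma_dens_def by (auto intro!: divide_nonneg_pos mult_pos_pos Gamma_real_pos)

lemma gamma_dens_zero: "x \<le> 0 \<Longrightarrow> gamma_dens a th x = 0"
  unfolding gamma_dens_def by auto

lemma joint_trans:
  fixes G :: "real \<times> real \<Rightarrow> ennreal"
  assumes a: "0 < a" and th: "0 < th1" "0 < th2"
  assumes Gm[measurable]: "G \<in> borel_measurable (lborel \<Otimes>\<^sub>M lborel)"
  shows "(\<integral>\<^sup>+\<omega>. G \<omega> \<partial>joint a th1 th2)
       = (\<integral>\<^sup>+t. \<integral>\<^sup>+x. indicator {0<..} x * ennreal x *
             (indicator {0<..1} t * ennreal (gamma_dens a th1 x * gamma_dens a th2 (t*x)) * G (x, t*x)
            + indicator {0<..<1} t * ennreal (gamma_dens a th1 (t*x) * gamma_dens a th2 x) * G (t*x, x)) \<partial>lborel \<partial>lborel)"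
proof -
  define p where "p \<omega> = ennreal (gamma_dens a th1 (fst \<omega>) * gamma_dens a th2 (snd \<omega>))" for \<omega> :: "real \<times> real"
  have pm[measurable]: "p \<in> borel_measurable (lborel \<Otimes>\<^sub>M lborel)" unfolding p_def by measurable
  define KA where "KA \<omega> = indicator {\<omega>. 0 < snd \<omega> \<and> snd \<omega> \<le> fst \<omega>} \<omega> * p \<omega> * G \<omega>" for \<omega> :: "real \<times> real"
  define KB where "KB \<omega> = indicator {\<omega>. 0 < fst \<omega> \<and> fst \<omega> < snd \<omega>} \<omega> * p \<omega> * G \<omega>" for \<omega> :: "real \<times> real"
  have KAm[measurable]: "KA \<in> borel_measurable (lborel \<Otimes>\<^sub>M lborel)" unfolding KA_def by measurable
  have KBm[measurable]: "KB \<in> borel_measurable (lborel \<Otimes>\<^sub>M lborel)" unfolding KB_def by measurable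
  have jd: "joint a th1 th2 = density (lborel \<Otimes>\<^sub>M lborel) p"
    unfolding joint_def p_def by (simp add: case_prod_unfold)
  have "(\<integral>\<^sup>+\<omega>. G \<omega> \<partial>joint a th1 th2) = (\<integral>\<^sup>+\<omega>. p \<omega> * G \<omega> \<partial>(lborel \<Otimes>\<^sub>M lborel))"
    unfolding jd by (rule nn_integral_density) auto
  also have "\<dots> = (\<integral>\<^sup>+\<omega>. indicator {0<..} (fst \<omega>) * KA \<omega> + indicator {0<..} (snd \<omega>) * KB \<omega> \<partial>(lborel \<Otimes>\<^sub>M lborel))"
  proof (rule nn_integral_cong)
    fix \<omega> :: "real \<times> real"
    obtain x1 x2 where o: "\<omega> = (x1, x2)" by (cases \<omega>)
    show "p \<omega> * G \<omega> = indicator {0<..} (fst \<omega>) * KA \<omega> + indicator {0<..} (snd \<omega>) * KB \<omega>"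
    proof (cases "x1 > 0 \<and> x2 > 0")
      case True
      then show ?thesis unfolding o KA_def KB_def by (auto simp: indicator_def)
    next
      case False
      then have "p \<omega> = 0" unfolding o p_def by (auto simp: gamma_dens_zero)
      then show ?thesis unfolding KA_def KB_def by simp
    qed
  qed
  also have "\<dots> = (\<integral>\<^sup>+\<omega>. indicator {0<..} (fst \<omega>) * KA \<omega> \<partial>(lborel \<Otimes>\<^sub>M lborel))
                + (\<integral>\<^sup>+\<omega>. indicator {0<..} (snd \<omega>) * KB \<omega> \<partial>(lborel \<Otimes>\<^sub>M lborel))"
    by (rule nn_integral_add) auto
  also have "\<dots> = (\<integral>\<^sup>+t. \<integral>\<^sup>+x. indicator {0<..} x * ennreal x * KA (x, t*x) \<partial>lborel \<partial>lborel)
                + (\<integral>\<^sup>+t. \<integral>\<^sup>+x. indicator {0<..} x * ennreal x * KB (t*x, x) \<partial>lborel \<partial>lborel)"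
    by (simp add: core1 core2)
  also have "\<dots> = (\<integral>\<^sup>+t. (\<integral>\<^sup>+x. indicator {0<..} x * ennreal x * KA (x, t*x) \<partial>lborel)
                + (\<integral>\<^sup>+x. indicator {0<..} x * ennreal x * KB (t*x, x) \<partial>lborel) \<partial>lborel)"
    by (rule nn_integral_add[symmetric]) auto
  also have "\<dots> = (\<integral>\<^sup>+t. \<integral>\<^sup>+x. indicator {0<..} x * ennreal x * KA (x, t*x)
                + indicator {0<..} x * ennreal x * KB (t*x, x) \<partial>lborel \<partial>lborel)"
    by (intro nn_integral_cong nn_integral_add[symmetric]) auto
  also have "\<dots> = (\<integral>\<^sup>+t. \<integral>\<^sup>+x. indicator {0<..} x * ennreal x *
             (indicator {0<..1} t * ennreal (gamma_dens a th1 x * gamma_dens a th2 (t*x)) * G (x, t*x)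
            + indicator {0<..<1} t * ennreal (gamma_dens a th1 (t*x) * gamma_dens a th2 x) * G (t*x, x)) \<partial>lborel \<partial>lborel)"
  proof (intro nn_integral_cong)
    fix t x :: real
    show "indicator {0<..} x * ennreal x * KA (x, t*x) + indicator {0<..} x * ennreal x * KB (t*x, x)
        = indicator {0<..} x * ennreal x *
             (indicator {0<..1} t * ennreal (gamma_dens a th1 x * gamma_dens a th2 (t*x)) * G (x, t*x)
            + indicator {0<..<1} t * ennreal (gamma_dens a th1 (t*x) * gamma_dens a th2 x) * G (t*x, x))"
    proof (cases "x > 0")
      case True
      have e1: "(0 < t*x \<and> t*x \<le> x) \<longleftrightarrow> t \<in> {0<..1}"
        using True by (auto simp: zero_less_mult_iff mult_le_cancel_right2)
      have e2: "(0 < t*x \<and> t*x < x) \<longleftrightarrow> t \<in> {0<..<1}"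
        using True by (auto simp: zero_less_mult_iff mult_less_cancel_right2)
      show ?thesis unfolding KA_def KB_def p_def using e1 e2 True
        by (simp add: indicator_def distrib_left)
    qed simp
  qed
  finally show ?thesis .
qed



definition gfun :: "real \<Rightarrow> real \<Rightarrow> real \<Rightarrow> real" where
  "gfun s l x = indicator {0<..} x * x powr (s-1) * exp (-(l*x))"

definition Jf :: "real \<Rightarrow> real \<Rightarrow> real \<Rightarrow> real" where
  "Jf s l d = (\<integral>x. gfun s l x * (ln x - d)\<^sup>2 \<partial>lborel)"

lemma gfun_meas[measurable]: "gfun s l \<in> borel_measurable borel"
  unfolding gfun_def by measurable

lemma gfun_nonneg: "0 \<le> gfun s l x"
  unfolding gfun_def by simp

lemma ln2_int:
  assumes s: "0 < s" and l: "0 < l"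
  shows "integrable lborel (\<lambda>x. gfun s l x * (ln x)\<^sup>2)"
proof -
  define d where "d = s/4"
  have d: "0 < d" "2*d < s" using s by (auto simp: d_def)
  have wi: "integrable lborel (\<lambda>x. gfun s l x * (x powr d + x powr (-d))\<^sup>2 / d\<^sup>2)"
    using dom_int[OF s l d] unfolding gfun_def by (intro integrable_divide) auto
  show ?thesis
  proof (rule Bochner_Integration.integrable_bound[OF wi])
    show "(\<lambda>x. gfun s l x * (ln x)\<^sup>2) \<in> borel_measurable lborel" by measurable
    show "AE x in lborel. norm (gfun s l x * (ln x)\<^sup>2) \<le> norm (gfun s l x * (x powr d + x powr (-d))\<^sup>2 / d\<^sup>2)"
    proof (intro AE_I2)
      fix x :: real
      show "norm (gfun s l x * (ln x)\<^sup>2) \<le> norm (gfun s l x * (x powr d + x powr (-d))\<^sup>2 / d\<^sup>2)"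
      proof (cases "x > 0")
        case True
        have "\<bar>ln x\<bar> \<le> (x powr d + x powr (-d)) / d" by (rule ln_bound[OF True d(1)])
        then have "\<bar>ln x\<bar>\<^sup>2 \<le> ((x powr d + x powr (-d)) / d)\<^sup>2" by (intro power_mono) auto
        then have "(ln x)\<^sup>2 \<le> (x powr d + x powr (-d))\<^sup>2 / d\<^sup>2" by (simp add: power_divide)
        then have "gfun s l x * (ln x)\<^sup>2 \<le> gfun s l x * ((x powr d + x powr (-d))\<^sup>2 / d\<^sup>2)"
          by (intro mult_left_mono gfun_nonneg)
        then show ?thesis using gfun_nonneg[of s l x] by (simp add: abs_mult)
      qed (simp add: gfun_def)
    qed
  qed
qed

lemma J_expand:
  assumes s: "0 < s" and l: "0 < l"
  shows "integrable lborel (\<lambda>x. gfun s l x * (ln x - d)\<^sup>2)"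
    and "Jf s l d = (\<integral>x. gfun s l x * (ln x)\<^sup>2 \<partial>lborel)
                    - 2 * d * (Gamma s * l powr (-s) * (Digamma s - ln l)) + d\<^sup>2 * (Gamma s * l powr (-s))"
proof -
  have i2: "integrable lborel (\<lambda>x. gfun s l x * (ln x)\<^sup>2)" by (rule ln2_int[OF s l])
  have h1: "has_bochner_integral lborel (\<lambda>x. gfun s l x * ln x) (Gamma s * l powr (-s) * (Digamma s - ln l))"
    using log_moment[OF s l] unfolding gfun_def .
  have h0: "has_bochner_integral lborel (gfun s l) (Gamma s * l powr (-s))"
    using gamma_hbi[OF s l] unfolding gfun_def[abs_def] .
  have eq: "(\<lambda>x. gfun s l x * (ln x - d)\<^sup>2) = (\<lambda>x. gfun s l x * (ln x)\<^sup>2 - 2 * d * (gfun s l x * ln x) + d\<^sup>2 * gfun s l x)"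
    by (auto simp: power2_eq_square algebra_simps)
  have "has_bochner_integral lborel (\<lambda>x. gfun s l x * (ln x)\<^sup>2 - 2 * d * (gfun s l x * ln x) + d\<^sup>2 * gfun s l x)
     ((\<integral>x. gfun s l x * (ln x)\<^sup>2 \<partial>lborel) - 2 * d * (Gamma s * l powr (-s) * (Digamma s - ln l)) + d\<^sup>2 * (Gamma s * l powr (-s)))"
    by (intro has_bochner_integral_add has_bochner_integral_diff has_bochner_integral_mult_right
        has_bochner_integral_integrable h1 h0 i2)
  then show "integrable lborel (\<lambda>x. gfun s l x * (ln x - d)\<^sup>2)"
    and "Jf s l d = (\<integral>x. gfun s l x * (ln x)\<^sup>2 \<partial>lborel)
                    - 2 * d * (Gamma s * l powr (-s) * (Digamma s - ln l)) + d\<^sup>2 * (Gamma s * l powr (-s))"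
    unfolding Jf_def eq by (auto simp: has_bochner_integral_iff)
qed

lemma J_diff:
  assumes s: "0 < s" and l: "0 < l"
  shows "Jf s l (u + L) - Jf s l (v + L) = Gamma s * l powr (-s) * (u - v) * ((u - v) + 2 * (v - Digamma s + ln l + L))"
  unfolding J_expand(2)[OF s l] by (simp add: power2_eq_square algebra_simps)

lemma key_ineq:
  fixes EA EB aA aB as :: real
  assumes "0 \<le> EB" "0 \<le> EA"
    and "aA + aB \<ge> 2 * as"
    and "(EA \<ge> EB \<and> aA \<ge> as) \<or> (EB \<ge> EA \<and> aB \<ge> as)"
  shows "EA * (aA - as) + EB * (aB - as) \<ge> 0"
proof -
  { assume h: "EA \<ge> EB" "aA \<ge> as"
    have "EA * (aA - as) \<ge> EB * (aA - as)" using h by (intro mult_right_mono) auto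
    moreover have "EB * (aA - as) + EB * (aB - as) \<ge> 0"
      using assms(1,3) by (simp add: distrib_left[symmetric])
    ultimately have ?thesis by linarith }
  moreover
  { assume h: "EB \<ge> EA" "aB \<ge> as"
    have "EB * (aB - as) \<ge> EA * (aB - as)" using h by (intro mult_right_mono) auto
    moreover have "EA * (aA - as) + EA * (aB - as) \<ge> 0"
      using assms(2,3) by (simp add: distrib_left[symmetric])
    ultimately have ?thesis by linarith }
  ultimately show ?thesis using assms(4) by blast
qed



lemma Q_cmp:
  fixes s th1 th2 t u :: real
  assumes s: "0 < s" and th: "0 < th1" "0 < th2" and t: "0 < t" "t < 1"
  defines "lA \<equiv> 1/th1 + t/th2" and "lB \<equiv> 1/th2 + t/th1"
  defines "v \<equiv> Digamma s - ln (1 + t)"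
  assumes uv: "v \<le> u"
  shows "Jf s lA (v + ln th1) + Jf s lB (v + ln th2) \<le> Jf s lA (u + ln th1) + Jf s lB (u + ln th2)"
    and "v < u \<Longrightarrow> Jf s lA (v + ln th1) + Jf s lB (v + ln th2) < Jf s lA (u + ln th1) + Jf s lB (u + ln th2)"
proof -
  have lA: "0 < lA" and lB: "0 < lB" using th t by (auto simp: lA_def lB_def intro!: add_pos_pos divide_pos_pos)
  define EA where "EA = Gamma s * lA powr (-s)"
  define EB where "EB = Gamma s * lB powr (-s)"
  have EA: "0 < EA" and EB: "0 < EB" using s lA lB by (auto simp: EA_def EB_def Gamma_real_pos)
  define aA where "aA = ln (th1 * lA)"
  define aB where "aB = ln (th2 * lB)"
  define as where "as = ln (1 + t)"
  have pA: "th1 * lA = 1 + t * th1 / th2" using th by (simp add: lA_def field_simps)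
  have pB: "th2 * lB = 1 + t * th2 / th1" using th by (simp add: lB_def field_simps)
  have sum: "aA + aB \<ge> 2 * as"
  proof -
    have "(1 + t) * (1 + t) \<le> (th1 * lA) * (th2 * lB)"
    proof -
      have "0 \<le> (th1 - th2) * (th1 - th2)" by simp
      then have "2 * th1 * th2 \<le> th1 * th1 + th2 * th2" by (simp add: algebra_simps)
      then have "2 \<le> th1 / th2 + th2 / th1" using th by (simp add: field_simps)
      then have "2 * t \<le> t * (th1 / th2 + th2 / th1)" using t by simp
      then show ?thesis unfolding pA pB using th by (simp add: algebra_simps)
    qed
    then have "ln ((1 + t) * (1 + t)) \<le> ln ((th1 * lA) * (th2 * lB))"
      using t by (intro ln_mono) auto
    then show ?thesis using t th lA lB unfolding aA_def aB_def as_def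
      by (simp add: ln_mult)
  qed
  have case_: "(EA \<ge> EB \<and> aA \<ge> as) \<or> (EB \<ge> EA \<and> aB \<ge> as)"
  proof (cases "th2 \<le> th1")
    case True
    have "lA \<le> lB"
    proof -
      have "lB - lA = (1/th2 - 1/th1) * (1 - t)" using th by (simp add: lA_def lB_def field_simps)
      moreover have "1/th1 \<le> 1/th2" using True th by (simp add: divide_simps)
      ultimately show ?thesis using t by (smt (verit) mult_nonneg_nonneg)
    qed
    then have "lA powr s \<le> lB powr s" by (intro powr_mono2) (use s lA in auto)
    then have "inverse (lB powr s) \<le> inverse (lA powr s)" by (intro le_imp_inverse_le) (use lA in auto)
    then have "EB \<le> EA" unfolding EA_def EB_def powr_minus
      by (intro mult_left_mono) (use s Gamma_real_pos[of s] in auto)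
    moreover have "as \<le> aA"
    proof -
      have "t \<le> t * th1 / th2" using True th t by (simp add: divide_simps)
      then show ?thesis unfolding aA_def as_def pA using t by (intro ln_mono) auto
    qed
    ultimately show ?thesis by blast
  next
    case False
    have "lB \<le> lA"
    proof -
      have "lA - lB = (1/th1 - 1/th2) * (1 - t)" using th by (simp add: lA_def lB_def field_simps)
      moreover have "1/th2 \<le> 1/th1" using False th by (simp add: divide_simps)
      ultimately show ?thesis using t by (smt (verit) mult_nonneg_nonneg)
    qed
    then have "lB powr s \<le> lA powr s" by (intro powr_mono2) (use s lB in auto)
    then have "inverse (lA powr s) \<le> inverse (lB powr s)" by (intro le_imp_inverse_le) (use lB in auto)
    then have "EA \<le> EB" unfolding EA_def EB_def powr_minus
      by (intro mult_left_mono) (use s Gamma_real_pos[of s] in auto)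
    moreover have "as \<le> aB"
    proof -
      have "t \<le> t * th2 / th1" using False th t by (simp add: divide_simps)
      then show ?thesis unfolding aB_def as_def pB using t by (intro ln_mono) auto
    qed
    ultimately show ?thesis by blast
  qed
  have K: "EA * (aA - as) + EB * (aB - as) \<ge> 0"
    by (rule key_ineq) (use EA EB sum case_ in auto)
  have dA: "Jf s lA (u + ln th1) - Jf s lA (v + ln th1) = EA * (u - v) * ((u - v) + 2 * (aA - as))"
    unfolding J_diff[OF s lA] EA_def aA_def as_def v_def using th lA by (simp add: ln_mult)
  have dB: "Jf s lB (u + ln th2) - Jf s lB (v + ln th2) = EB * (u - v) * ((u - v) + 2 * (aB - as))"
    unfolding J_diff[OF s lB] EB_def aB_def as_def v_def using th lB by (simp add: ln_mult)
  have tot: "(Jf s lA (u + ln th1) + Jf s lB (u + ln th2)) - (Jf s lA (v + ln th1) + Jf s lB (v + ln th2))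
      = (u - v) * ((EA + EB) * (u - v) + 2 * (EA * (aA - as) + EB * (aB - as)))"
    using dA dB by (simp add: algebra_simps)
  have "0 \<le> (u - v) * ((EA + EB) * (u - v) + 2 * (EA * (aA - as) + EB * (aB - as)))"
  proof -
    have "0 \<le> (EA + EB) * (u - v)" using uv EA EB by simp
    then show ?thesis using uv K by simp
  qed
  then show "Jf s lA (v + ln th1) + Jf s lB (v + ln th2) \<le> Jf s lA (u + ln th1) + Jf s lB (u + ln th2)"
    using tot by linarith
  assume "v < u"
  then have "0 < (u - v) * ((EA + EB) * (u - v) + 2 * (EA * (aA - as) + EB * (aB - as)))"
  proof -
    have "0 < (EA + EB) * (u - v)" using \<open>v < u\<close> EA EB by simp
    then show ?thesis using \<open>v < u\<close> K by simp
  qed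
  then show "Jf s lA (v + ln th1) + Jf s lB (v + ln th2) < Jf s lA (u + ln th1) + Jf s lB (u + ln th2)"
    using tot by linarith
qed



lemma pdensA:
  assumes a: "0 < a" and th: "0 < th1" "0 < th2" and x: "0 < x" and t: "0 < t"
  shows "x * (gamma_dens a th1 x * gamma_dens a th2 (t*x))
       = (1 / (Gamma a ^ 2 * th1 powr a * th2 powr a)) * t powr (a-1) * gfun (2*a) (1/th1 + t/th2) x"
proof -
  have e0: "x powr (1 + (a-1) + (a-1)) = x powr 1 * x powr (a-1) * x powr (a-1)" by (simp only: powr_add)
  have e1: "x powr (2*a-1) = x * x powr (a-1) * x powr (a-1)"
    using e0 x by (simp add: algebra_simps)
  have e2: "exp (-x/th1) * exp (-(t*x)/th2) = exp (-((1/th1 + t/th2) * x))"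
    by (subst exp_add[symmetric]) (simp add: field_simps)
  have e3: "(t*x) powr (a-1) = t powr (a-1) * x powr (a-1)"
    using t x by (simp add: powr_mult)
  have g: "Gamma a > 0" using a by (rule Gamma_real_pos)
  show ?thesis
    unfolding gamma_dens_def gfun_def using x t e1 e2[symmetric] e3 g th
    by (simp add: field_simps power2_eq_square)
qed

lemma pdensB:
  assumes a: "0 < a" and th: "0 < th1" "0 < th2" and x: "0 < x" and t: "0 < t"
  shows "x * (gamma_dens a th1 (t*x) * gamma_dens a th2 x)
       = (1 / (Gamma a ^ 2 * th1 powr a * th2 powr a)) * t powr (a-1) * gfun (2*a) (1/th2 + t/th1) x"
  using pdensA[OF a th(2) th(1) x t] by (simp add: mult_ac)

definition Qf :: "real \<Rightarrow> real \<Rightarrow> real \<Rightarrow> real \<Rightarrow> real \<Rightarrow> real" where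
  "Qf a th1 th2 u t = (1 / (Gamma a ^ 2 * th1 powr a * th2 powr a)) * t powr (a-1) *
      (Jf (2*a) (1/th1 + t/th2) (u + ln th1) + Jf (2*a) (1/th2 + t/th1) (u + ln th2))"

lemma T_meas[measurable]: "T \<in> borel_measurable (lborel \<Otimes>\<^sub>M lborel)"
  unfolding T_def[abs_def] Z1_def Z2_def by (simp add: case_prod_unfold)

lemma Z2_meas[measurable]: "Z2 \<in> borel_measurable (lborel \<Otimes>\<^sub>M lborel)"
  unfolding Z2_def by (simp add: case_prod_unfold)

lemma H_meas[measurable]: "H_S th1 th2 \<in> borel_measurable (lborel \<Otimes>\<^sub>M lborel)"
  unfolding H_S_def by (simp add: case_prod_unfold)

lemma delta_meas[measurable]:
  assumes [measurable]: "c \<in> borel_measurable borel"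
  shows "delta c \<in> borel_measurable (lborel \<Otimes>\<^sub>M lborel)"
  unfolding delta_def[abs_def] by measurable

lemma vals_A:
  assumes x: "0 < x" and t: "0 < t" "t \<le> 1"
  shows "Z2 (x, t*x) = x" "T (x, t*x) = t" "H_S th1 th2 (x, t*x) = ln th1"
proof -
  have le: "t*x \<le> x" using x t by (simp add: mult_le_cancel_right1)
  show "Z2 (x, t*x) = x" using le by (simp add: Z2_def)
  show "T (x, t*x) = t" using le x by (simp add: T_def Z1_def Z2_def)
  show "H_S th1 th2 (x, t*x) = ln th1" using le by (simp add: H_S_def)
qed

lemma vals_B:
  assumes x: "0 < x" and t: "0 < t" "t < 1"
  shows "Z2 (t*x, x) = x" "T (t*x, x) = t" "H_S th1 th2 (t*x, x) = ln th2"
proof -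
  have le: "t*x < x" using x t by (simp add: mult_less_cancel_right1)
  show "Z2 (t*x, x) = x" using le by (simp add: Z2_def)
  show "T (t*x, x) = t" using le x by (simp add: T_def Z1_def Z2_def)
  show "H_S th1 th2 (t*x, x) = ln th2" using le by (simp add: H_S_def)
qed

lemma Jf_nonneg: "0 \<le> Jf s l d"
  unfolding Jf_def by (intro integral_nonneg_AE AE_I2 mult_nonneg_nonneg gfun_nonneg) auto

lemma Qf_nonneg: "0 < a \<Longrightarrow> 0 < th1 \<Longrightarrow> 0 < th2 \<Longrightarrow> 0 < t \<Longrightarrow> 0 \<le> Qf a th1 th2 u t"
proof -
  assume a: "0 < a" and th: "0 < th1" "0 < th2" and t: "0 < t"
  have g: "0 < Gamma a" by (rule Gamma_real_pos[OF a])
  have "0 < Gamma a ^ 2 * th1 powr a * th2 powr a" using g th by (intro mult_pos_pos) auto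
  then show ?thesis unfolding Qf_def using t
    by (intro mult_nonneg_nonneg add_nonneg_nonneg Jf_nonneg) auto
qed

lemma risk_nn:
  assumes a: "0 < a" and th: "0 < th1" "0 < th2" and cm[measurable]: "c \<in> borel_measurable borel"
  shows "(\<integral>\<^sup>+\<omega>. ennreal ((delta c \<omega> - H_S th1 th2 \<omega>)\<^sup>2) \<partial>joint a th1 th2)
       = (\<integral>\<^sup>+t. indicator {0<..<1} t * ennreal (Qf a th1 th2 (c t) t) \<partial>lborel)"
proof -
  define G where "G \<omega> = ennreal ((delta c \<omega> - H_S th1 th2 \<omega>)\<^sup>2)" for \<omega>
  have Gm[measurable]: "G \<in> borel_measurable (lborel \<Otimes>\<^sub>M lborel)" unfolding G_def by measurable
  define C where "C = 1 / (Gamma a ^ 2 * th1 powr a * th2 powr a)"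
  have g: "0 < Gamma a" by (rule Gamma_real_pos[OF a])
  have "0 < Gamma a ^ 2 * th1 powr a * th2 powr a" using g th by (intro mult_pos_pos) auto
  then have C: "0 < C" by (simp add: C_def)
  have "(\<integral>\<^sup>+\<omega>. G \<omega> \<partial>joint a th1 th2)
       = (\<integral>\<^sup>+t. \<integral>\<^sup>+x. indicator {0<..} x * ennreal x *
             (indicator {0<..1} t * ennreal (gamma_dens a th1 x * gamma_dens a th2 (t*x)) * G (x, t*x)
            + indicator {0<..<1} t * ennreal (gamma_dens a th1 (t*x) * gamma_dens a th2 x) * G (t*x, x)) \<partial>lborel \<partial>lborel)"
    by (rule joint_trans[OF a th Gm])
  also have "\<dots> = (\<integral>\<^sup>+t. indicator {0<..<1} t * ennreal (Qf a th1 th2 (c t) t) \<partial>lborel)"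
  proof (rule nn_integral_cong_AE)
    show "AE t in lborel. (\<integral>\<^sup>+x. indicator {0<..} x * ennreal x *
             (indicator {0<..1} t * ennreal (gamma_dens a th1 x * gamma_dens a th2 (t*x)) * G (x, t*x)
            + indicator {0<..<1} t * ennreal (gamma_dens a th1 (t*x) * gamma_dens a th2 x) * G (t*x, x)) \<partial>lborel)
          = indicator {0<..<1} t * ennreal (Qf a th1 th2 (c t) t)"
      using AE_lborel_singleton[of 1]
    proof eventually_elim
      case (elim t)
      show ?case
      proof (cases "t \<in> {0<..<1}")
        case False
        then have "t \<notin> {0<..1}" using elim by auto
        then show ?thesis using False by simp
      next
        case True
        then have t: "0 < t" "t < 1" by auto
        define lA where "lA = 1/th1 + t/th2"
        define lB where "lB = 1/th2 + t/th1"
        have lA: "0 < lA" and lB: "0 < lB" using th t by (auto simp: lA_def lB_def intro!: add_pos_pos divide_pos_pos)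
        have ct: "0 \<le> C * t powr (a-1)" using C by simp
        have "(\<integral>\<^sup>+x. indicator {0<..} x * ennreal x *
             (indicator {0<..1} t * ennreal (gamma_dens a th1 x * gamma_dens a th2 (t*x)) * G (x, t*x)
            + indicator {0<..<1} t * ennreal (gamma_dens a th1 (t*x) * gamma_dens a th2 x) * G (t*x, x)) \<partial>lborel)
          = (\<integral>\<^sup>+x. ennreal (C * t powr (a-1)) * (ennreal (gfun (2*a) lA x * (ln x - (c t + ln th1))\<^sup>2)
               + ennreal (gfun (2*a) lB x * (ln x - (c t + ln th2))\<^sup>2)) \<partial>lborel)"
        proof (rule nn_integral_cong)
          fix x :: real
          show "indicator {0<..} x * ennreal x *
             (indicator {0<..1} t * ennreal (gamma_dens a th1 x * gamma_dens a th2 (t*x)) * G (x, t*x)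
            + indicator {0<..<1} t * ennreal (gamma_dens a th1 (t*x) * gamma_dens a th2 x) * G (t*x, x))
            = ennreal (C * t powr (a-1)) * (ennreal (gfun (2*a) lA x * (ln x - (c t + ln th1))\<^sup>2)
               + ennreal (gfun (2*a) lB x * (ln x - (c t + ln th2))\<^sup>2))"
          proof (cases "x > 0")
            case False
            then show ?thesis by (simp add: gfun_def)
          next
            case True
            have pA: "x * (gamma_dens a th1 x * gamma_dens a th2 (t*x)) = C * t powr (a-1) * gfun (2*a) lA x"
              using pdensA[OF a th True t(1)] by (simp add: C_def lA_def)
            have pB: "x * (gamma_dens a th1 (t*x) * gamma_dens a th2 x) = C * t powr (a-1) * gfun (2*a) lB x"
              using pdensB[OF a th True t(1)] by (simp add: C_def lB_def)
            have GA: "G (x, t*x) = ennreal ((ln x - (c t + ln th1))\<^sup>2)"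
              using vals_A[OF True t(1) less_imp_le[OF t(2)]] unfolding G_def delta_def by (simp add: algebra_simps)
            have GB: "G (t*x, x) = ennreal ((ln x - (c t + ln th2))\<^sup>2)"
              using vals_B[OF True t] unfolding G_def delta_def by (simp add: algebra_simps)
            have n1: "0 \<le> gamma_dens a th1 x * gamma_dens a th2 (t*x)"
              using a th by (intro mult_nonneg_nonneg gamma_dens_nonneg)
            have n2: "0 \<le> gamma_dens a th1 (t*x) * gamma_dens a th2 x"
              using a th by (intro mult_nonneg_nonneg gamma_dens_nonneg)
            have "indicator {0<..} x * ennreal x *
             (indicator {0<..1} t * ennreal (gamma_dens a th1 x * gamma_dens a th2 (t*x)) * G (x, t*x)
            + indicator {0<..<1} t * ennreal (gamma_dens a th1 (t*x) * gamma_dens a th2 x) * G (t*x, x))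
              = ennreal (x * (gamma_dens a th1 x * gamma_dens a th2 (t*x)) * (ln x - (c t + ln th1))\<^sup>2)
              + ennreal (x * (gamma_dens a th1 (t*x) * gamma_dens a th2 x) * (ln x - (c t + ln th2))\<^sup>2)"
              using True t n1 n2 unfolding GA GB
              by (simp add: ennreal_mult[symmetric] distrib_left mult.assoc) (simp add: ennreal_mult'[symmetric])
            also have "\<dots> = ennreal (C * t powr (a-1)) * (ennreal (gfun (2*a) lA x * (ln x - (c t + ln th1))\<^sup>2)
               + ennreal (gfun (2*a) lB x * (ln x - (c t + ln th2))\<^sup>2))"
              unfolding pA pB using ct gfun_nonneg[of "2*a" lA x] gfun_nonneg[of "2*a" lB x]
              by (simp add: ennreal_mult[symmetric] distrib_left mult.assoc)
            finally show ?thesis .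
          qed
        qed
        also have "\<dots> = ennreal (C * t powr (a-1)) * ((\<integral>\<^sup>+x. ennreal (gfun (2*a) lA x * (ln x - (c t + ln th1))\<^sup>2) \<partial>lborel)
               + (\<integral>\<^sup>+x. ennreal (gfun (2*a) lB x * (ln x - (c t + ln th2))\<^sup>2) \<partial>lborel))"
          by (simp add: nn_integral_cmult nn_integral_add)
        also have "\<dots> = ennreal (C * t powr (a-1)) * (ennreal (Jf (2*a) lA (c t + ln th1)) + ennreal (Jf (2*a) lB (c t + ln th2)))"
        proof -
          have s: "0 < 2*a" using a by simp
          have "(\<integral>\<^sup>+x. ennreal (gfun (2*a) lA x * (ln x - (c t + ln th1))\<^sup>2) \<partial>lborel) = ennreal (Jf (2*a) lA (c t + ln th1))"
            unfolding Jf_def by (rule nn_integral_eq_integral[OF J_expand(1)[OF s lA]]) (simp add: gfun_nonneg)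
          moreover have "(\<integral>\<^sup>+x. ennreal (gfun (2*a) lB x * (ln x - (c t + ln th2))\<^sup>2) \<partial>lborel) = ennreal (Jf (2*a) lB (c t + ln th2))"
            unfolding Jf_def by (rule nn_integral_eq_integral[OF J_expand(1)[OF s lB]]) (simp add: gfun_nonneg)
          ultimately show ?thesis by simp
        qed
        also have "\<dots> = indicator {0<..<1} t * ennreal (Qf a th1 th2 (c t) t)"
          using True ct Jf_nonneg
          by (simp add: Qf_def C_def[symmetric] lA_def[symmetric] lB_def[symmetric] ennreal_mult[symmetric] ennreal_plus[symmetric]
               del: ennreal_plus)
        finally show ?thesis .
      qed
    qed
  qed
  finally show ?thesis unfolding G_def .
qed



lemma Qf_cmp:
  assumes a: "0 < a" and th: "0 < th1" "0 < th2" and t: "0 < t" "t < 1"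
    and uv: "Digamma (2*a) - ln (1 + t) \<le> u"
  shows "Qf a th1 th2 (Digamma (2*a) - ln (1 + t)) t \<le> Qf a th1 th2 u t"
    and "Digamma (2*a) - ln (1 + t) < u \<Longrightarrow> Qf a th1 th2 (Digamma (2*a) - ln (1 + t)) t < Qf a th1 th2 u t"
proof -
  have s: "0 < 2*a" using a by simp
  have g: "0 < Gamma a" by (rule Gamma_real_pos[OF a])
  have "0 < Gamma a ^ 2 * th1 powr a * th2 powr a" using g th by (intro mult_pos_pos) auto
  then have C: "0 < (1 / (Gamma a ^ 2 * th1 powr a * th2 powr a)) * t powr (a-1)" using t by simp
  note q = Q_cmp[OF s th t uv]
  show "Qf a th1 th2 (Digamma (2*a) - ln (1 + t)) t \<le> Qf a th1 th2 u t"
    unfolding Qf_def mult.assoc[symmetric] using q(1) C by (intro mult_left_mono) auto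
  assume "Digamma (2*a) - ln (1 + t) < u"
  then show "Qf a th1 th2 (Digamma (2*a) - ln (1 + t)) t < Qf a th1 th2 u t"
    unfolding Qf_def mult.assoc[symmetric] using q(2) C by (intro mult_strict_left_mono) auto
qed

lemma Qf_meas[measurable]:
  assumes [measurable]: "c \<in> borel_measurable borel"
  shows "(\<lambda>t. Qf a th1 th2 (c t) t) \<in> borel_measurable lborel"
  unfolding Qf_def Jf_def gfun_def by measurable

lemma AE_pos: "AE \<omega> in joint a th1 th2. 0 < fst \<omega> \<and> 0 < snd \<omega>"
proof -
  have pm: "(\<lambda>(x1, x2). ennreal (gamma_dens a th1 x1 * gamma_dens a th2 x2)) \<in> borel_measurable (lborel \<Otimes>\<^sub>M lborel)"
    by measurable
  show ?thesis unfolding joint_def AE_density[OF pm]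
  proof (intro AE_I2 impI)
    fix \<omega> :: "real \<times> real"
    assume "0 < (case \<omega> of (x1, x2) \<Rightarrow> ennreal (gamma_dens a th1 x1 * gamma_dens a th2 x2))"
    then have h: "0 < gamma_dens a th1 (fst \<omega>) * gamma_dens a th2 (snd \<omega>)"
      by (cases \<omega>) auto
    show "0 < fst \<omega> \<and> 0 < snd \<omega>"
    proof (rule ccontr)
      assume "\<not> (0 < fst \<omega> \<and> 0 < snd \<omega>)"
      then have "gamma_dens a th1 (fst \<omega>) * gamma_dens a th2 (snd \<omega>) = 0"
        by (auto simp: gamma_dens_zero not_less)
      then show False using h by (metis less_irrefl)
    qed
  qed
qed

lemma T_range: "0 < fst \<omega> \<Longrightarrow> 0 < snd \<omega> \<Longrightarrow> T \<omega> \<in> {0<..1}"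
  by (cases \<omega>) (auto simp: T_def Z1_def Z2_def divide_le_eq_1)

lemma sets_joint[measurable_cong]: "sets (joint a th1 th2) = sets (lborel \<Otimes>\<^sub>M lborel)"
  unfolding joint_def by simp

lemma risk_cong:
  assumes cm[measurable]: "c' \<in> borel_measurable borel" and eq: "\<forall>t\<in>{0<..1}. c t = c' t"
    and fr: "finite_risk a th1 th2 (delta c)"
  shows "risk a th1 th2 (delta c) = risk a th1 th2 (delta c')"
    and "finite_risk a th1 th2 (delta c')"
proof -
  have AE: "AE \<omega> in joint a th1 th2. (delta c \<omega> - H_S th1 th2 \<omega>)\<^sup>2 = (delta c' \<omega> - H_S th1 th2 \<omega>)\<^sup>2"
    using AE_pos
  proof eventually_elim
    case (elim \<omega>)
    then show ?case using T_range[of \<omega>] eq by (simp add: delta_def)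
  qed
  have m': "(\<lambda>\<omega>. (delta c' \<omega> - H_S th1 th2 \<omega>)\<^sup>2) \<in> borel_measurable (joint a th1 th2)"
    by measurable
  have m: "(\<lambda>\<omega>. (delta c \<omega> - H_S th1 th2 \<omega>)\<^sup>2) \<in> borel_measurable (joint a th1 th2)"
    using fr unfolding finite_risk_def by auto
  show "risk a th1 th2 (delta c) = risk a th1 th2 (delta c')"
    unfolding risk_def by (rule integral_cong_AE[OF m m' AE])
  show "finite_risk a th1 th2 (delta c')"
    using fr unfolding finite_risk_def by (rule integrable_cong_AE_imp[OF _ m' AE])
qed



theorem theorem2p2:
  fixes \<alpha> :: real and \<Phi> :: "real \<Rightarrow> real"
  assumes alpha_pos: "0 < \<alpha>"
    and meas: "\<Phi> \<in> borel_measurable (restrict_space borel {0<..1})"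
    and fin: "\<forall>\<theta>1 \<theta>2. 0 < \<theta>1 \<and> 0 < \<theta>2 \<longrightarrow> finite_risk \<alpha> \<theta>1 \<theta>2 (delta \<Phi>)"
    and improv: "\<exists>\<theta>1 \<theta>2. 0 < \<theta>1 \<and> 0 < \<theta>2 \<and>
        measure (joint \<alpha> \<theta>1 \<theta>2) {\<omega> \<in> space (joint \<alpha> \<theta>1 \<theta>2).
            \<Phi> (T \<omega>) > Phi_star \<alpha> (T \<omega>)} > 0"
  shows "(\<forall>\<theta>1 \<theta>2. 0 < \<theta>1 \<and> 0 < \<theta>2 \<longrightarrow>
            risk \<alpha> \<theta>1 \<theta>2 (delta (Phi_I \<alpha> \<Phi>)) \<le> risk \<alpha> \<theta>1 \<theta>2 (delta \<Phi>))
       \<and> (\<exists>\<theta>1 \<theta>2. 0 < \<theta>1 \<and> 0 < \<theta>2 \<and>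
            risk \<alpha> \<theta>1 \<theta>2 (delta (Phi_I \<alpha> \<Phi>)) < risk \<alpha> \<theta>1 \<theta>2 (delta \<Phi>))"
proof -
  define P' where "P' t = (if t \<in> {0<..1} then \<Phi> t else 0)" for t
  have P'm[measurable]: "P' \<in> borel_measurable borel"
    using meas unfolding P'_def[abs_def]
    by (subst (asm) measurable_restrict_space_iff) auto
  define PI where "PI = Phi_I \<alpha> P'"
  have PIm[measurable]: "PI \<in> borel_measurable borel"
    unfolding PI_def Phi_I_def[abs_def] by measurable
  have eqP: "\<forall>t\<in>{0<..1}. \<Phi> t = P' t" by (simp add: P'_def)
  have eqI: "\<forall>t\<in>{0<..1}. Phi_I \<alpha> \<Phi> t = PI t" by (simp add: PI_def Phi_I_def P'_def)
  define N where "N th1 th2 c = (\<integral>\<^sup>+t. indicator {0<..<1} t * ennreal (Qf \<alpha> th1 th2 (c t) t) \<partial>lborel)"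
    for th1 th2 and c :: "real \<Rightarrow> real"
  have riskN: "risk \<alpha> th1 th2 (delta c) = enn2real (N th1 th2 c)"
    if th: "0 < th1" "0 < th2" and cm[measurable]: "c \<in> borel_measurable borel" for th1 th2 c
  proof -
    have "risk \<alpha> th1 th2 (delta c) = enn2real (\<integral>\<^sup>+\<omega>. ennreal ((delta c \<omega> - H_S th1 th2 \<omega>)\<^sup>2) \<partial>joint \<alpha> th1 th2)"
      unfolding risk_def by (rule integral_eq_nn_integral) auto
    then show ?thesis unfolding N_def risk_nn[OF alpha_pos th cm] .
  qed
  have ptw: "Qf \<alpha> th1 th2 (PI t) t \<le> Qf \<alpha> th1 th2 (P' t) t"
    "P' t > Phi_star \<alpha> t \<Longrightarrow> Qf \<alpha> th1 th2 (PI t) t < Qf \<alpha> th1 th2 (P' t) t"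
    if th: "0 < th1" "0 < th2" and t: "0 < t" "t < 1" for th1 th2 t
  proof -
    show "Qf \<alpha> th1 th2 (PI t) t \<le> Qf \<alpha> th1 th2 (P' t) t"
    proof (cases "P' t > Digamma (2 * \<alpha>) - ln (1 + t)")
      case True
      then show ?thesis unfolding PI_def Phi_I_def using Qf_cmp(1)[OF alpha_pos th t, of "P' t"] by simp
    next
      case False
      then show ?thesis unfolding PI_def Phi_I_def by simp
    qed
    assume "P' t > Phi_star \<alpha> t"
    then have True: "P' t > Digamma (2 * \<alpha>) - ln (1 + t)" by (simp add: Phi_star_def)
    then show "Qf \<alpha> th1 th2 (PI t) t < Qf \<alpha> th1 th2 (P' t) t"
      unfolding PI_def Phi_I_def using Qf_cmp(2)[OF alpha_pos th t, of "P' t"] by simp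
  qed
  have NI_le: "N th1 th2 PI \<le> N th1 th2 P'" if th: "0 < th1" "0 < th2" for th1 th2
    unfolding N_def
  proof (intro nn_integral_mono)
    fix t :: real
    show "indicator {0<..<1} t * ennreal (Qf \<alpha> th1 th2 (PI t) t) \<le> indicator {0<..<1} t * ennreal (Qf \<alpha> th1 th2 (P' t) t)"
      using ptw(1)[OF th, of t] by (cases "t \<in> {0<..<1}") (auto intro: ennreal_leI)
  qed
  have finP: "N th1 th2 P' < \<infinity>" if th: "0 < th1" "0 < th2" for th1 th2
  proof -
    have fr: "finite_risk \<alpha> th1 th2 (delta P')" using risk_cong(2)[OF P'm eqP] fin th by blast
    have "(\<integral>\<^sup>+\<omega>. ennreal ((delta P' \<omega> - H_S th1 th2 \<omega>)\<^sup>2) \<partial>joint \<alpha> th1 th2) < \<infinity>"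
      using fr unfolding finite_risk_def by (simp add: integrable_iff_bounded)
    then show ?thesis unfolding N_def risk_nn[OF alpha_pos th P'm, symmetric] .
  qed
  have riskP: "risk \<alpha> th1 th2 (delta \<Phi>) = enn2real (N th1 th2 P')" if th: "0 < th1" "0 < th2" for th1 th2
    using risk_cong(1)[OF P'm eqP] fin th riskN[OF th P'm] by auto
  have riskI: "risk \<alpha> th1 th2 (delta (Phi_I \<alpha> \<Phi>)) \<le> enn2real (N th1 th2 PI)" if th: "0 < th1" "0 < th2" for th1 th2
  proof (cases "finite_risk \<alpha> th1 th2 (delta (Phi_I \<alpha> \<Phi>))")
    case True
    then show ?thesis using risk_cong(1)[OF PIm eqI True] riskN[OF th PIm] by simp
  next
    case False
    then have "risk \<alpha> th1 th2 (delta (Phi_I \<alpha> \<Phi>)) = 0"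
      unfolding risk_def finite_risk_def by (rule not_integrable_integral_eq)
    then show ?thesis by simp
  qed
  have part1: "risk \<alpha> th1 th2 (delta (Phi_I \<alpha> \<Phi>)) \<le> risk \<alpha> th1 th2 (delta \<Phi>)" if th: "0 < th1" "0 < th2" for th1 th2
  proof -
    have "enn2real (N th1 th2 PI) \<le> enn2real (N th1 th2 P')"
      using NI_le[OF th] finP[OF th] by (intro enn2real_mono) auto
    then show ?thesis using riskI[OF th] riskP[OF th] by linarith
  qed
  obtain th1 th2 where th: "0 < th1" "0 < th2"
    and mS: "measure (joint \<alpha> th1 th2) {\<omega> \<in> space (joint \<alpha> th1 th2). \<Phi> (T \<omega>) > Phi_star \<alpha> (T \<omega>)} > 0"
    using improv by blast
  define S where "S = {\<omega> \<in> space (joint \<alpha> th1 th2). \<Phi> (T \<omega>) > Phi_star \<alpha> (T \<omega>)}"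
  define E where "E = {\<omega>. P' (T \<omega>) > Phi_star \<alpha> (T \<omega>)}"
  have spj: "space (joint \<alpha> th1 th2) = UNIV" by (simp add: joint_def space_pair_measure)
  have Em[measurable]: "E \<in> sets (lborel \<Otimes>\<^sub>M lborel)"
  proof -
    have "{\<omega> \<in> space (lborel \<Otimes>\<^sub>M lborel). P' (T \<omega>) > Phi_star \<alpha> (T \<omega>)} \<in> sets (lborel \<Otimes>\<^sub>M lborel)"
      unfolding Phi_star_def by measurable
    then show ?thesis unfolding E_def by (simp add: space_pair_measure)
  qed
  have Sm: "S \<in> sets (joint \<alpha> th1 th2)"
  proof (rule ccontr)
    assume "S \<notin> sets (joint \<alpha> th1 th2)"
    then have "measure (joint \<alpha> th1 th2) S = 0" by (rule measure_notin_sets)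
    then show False using mS unfolding S_def by simp
  qed
  have "measure (joint \<alpha> th1 th2) E = measure (joint \<alpha> th1 th2) S"
  proof (rule measure_eq_AE)
    show "AE x in joint \<alpha> th1 th2. (x \<in> E) = (x \<in> S)"
      using AE_pos
    proof eventually_elim
      case (elim \<omega>)
      then show ?case using T_range[of \<omega>] eqP unfolding E_def S_def spj by auto
    qed
    show "E \<in> sets (joint \<alpha> th1 th2)" using Em by (simp add: joint_def)
  qed (rule Sm)
  then have mE: "emeasure (joint \<alpha> th1 th2) E \<noteq> 0" using mS unfolding S_def measure_def by auto
  have notAE: "\<not> (AE t in lborel. indicator {0<..<1} t * ennreal (Qf \<alpha> th1 th2 (P' t) t)
                  \<le> indicator {0<..<1} t * ennreal (Qf \<alpha> th1 th2 (PI t) t))"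
  proof
    assume A: "AE t in lborel. indicator {0<..<1} t * ennreal (Qf \<alpha> th1 th2 (P' t) t)
                  \<le> indicator {0<..<1} t * ennreal (Qf \<alpha> th1 th2 (PI t) t)"
    have "emeasure (joint \<alpha> th1 th2) E = (\<integral>\<^sup>+\<omega>. indicator E \<omega> \<partial>joint \<alpha> th1 th2)"
      using Em by (simp add: joint_def)
    also have "\<dots> = (\<integral>\<^sup>+t. \<integral>\<^sup>+x. indicator {0<..} x * ennreal x *
             (indicator {0<..1} t * ennreal (gamma_dens \<alpha> th1 x * gamma_dens \<alpha> th2 (t*x)) * indicator E (x, t*x)
            + indicator {0<..<1} t * ennreal (gamma_dens \<alpha> th1 (t*x) * gamma_dens \<alpha> th2 x) * indicator E (t*x, x)) \<partial>lborel \<partial>lborel)"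
      by (rule joint_trans[OF alpha_pos th]) measurable
    also have "\<dots> = 0"
    proof -
      have "AE t in lborel. (\<integral>\<^sup>+x. indicator {0<..} x * ennreal x *
             (indicator {0<..1} t * ennreal (gamma_dens \<alpha> th1 x * gamma_dens \<alpha> th2 (t*x)) * indicator E (x, t*x)
            + indicator {0<..<1} t * ennreal (gamma_dens \<alpha> th1 (t*x) * gamma_dens \<alpha> th2 x) * indicator E (t*x, x)) \<partial>lborel) = 0"
        using A AE_lborel_singleton[of 1]
      proof eventually_elim
        case (elim t)
        have z: "indicator {0<..} x * ennreal x *
             (indicator {0<..1} t * ennreal (gamma_dens \<alpha> th1 x * gamma_dens \<alpha> th2 (t*x)) * indicator E (x, t*x)
            + indicator {0<..<1} t * ennreal (gamma_dens \<alpha> th1 (t*x) * gamma_dens \<alpha> th2 x) * indicator E (t*x, x)) = 0"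
          for x :: real
        proof (cases "x > 0 \<and> t \<in> {0<..<1}")
          case True
          then have x: "0 < x" and t: "0 < t" "t < 1" by auto
          have "ennreal (Qf \<alpha> th1 th2 (P' t) t) \<le> ennreal (Qf \<alpha> th1 th2 (PI t) t)"
            using elim(1) True by simp
          then have "Qf \<alpha> th1 th2 (P' t) t \<le> Qf \<alpha> th1 th2 (PI t) t"
            using Qf_nonneg[OF alpha_pos th t(1)] by (simp add: ennreal_le_iff)
          then have np: "\<not> P' t > Phi_star \<alpha> t" using ptw(2)[OF th t] by fastforce
          have "(x, t*x) \<notin> E" "(t*x, x) \<notin> E"
            using np vals_A(2)[OF x t(1) less_imp_le[OF t(2)]] vals_B(2)[OF x t] unfolding E_def by auto
          then show ?thesis by simp
        next
          case False
          then have "x \<le> 0 \<or> t \<notin> {0<..1}" using elim(2) by auto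
          then show ?thesis by auto
        qed
        show ?case by (simp add: z)
      qed
      from nn_integral_cong_AE[OF this] show ?thesis by simp
    qed
    finally show False using mE by simp
  qed
  have fP: "N th1 th2 P' < \<infinity>" by (rule finP[OF th])
  have fI: "N th1 th2 PI \<noteq> \<infinity>" using NI_le[OF th] fP by (auto simp: top_unique)
  have lt: "N th1 th2 PI < N th1 th2 P'"
    unfolding N_def
  proof (rule nn_integral_less)
    show "(\<integral>\<^sup>+t. indicator {0<..<1} t * ennreal (Qf \<alpha> th1 th2 (PI t) t) \<partial>lborel) \<noteq> \<infinity>"
      using fI unfolding N_def .
    show "AE t in lborel. indicator {0<..<1} t * ennreal (Qf \<alpha> th1 th2 (PI t) t)
          \<le> indicator {0<..<1} t * ennreal (Qf \<alpha> th1 th2 (P' t) t)"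
    proof (intro AE_I2)
      fix t :: real
      show "indicator {0<..<1} t * ennreal (Qf \<alpha> th1 th2 (PI t) t) \<le> indicator {0<..<1} t * ennreal (Qf \<alpha> th1 th2 (P' t) t)"
        using ptw(1)[OF th, of t] by (cases "t \<in> {0<..<1}") (auto intro: ennreal_leI)
    qed
    show "\<not> (AE t in lborel. indicator {0<..<1} t * ennreal (Qf \<alpha> th1 th2 (P' t) t)
                  \<le> indicator {0<..<1} t * ennreal (Qf \<alpha> th1 th2 (PI t) t))"
      by (rule notAE)
  qed measurable
  have "enn2real (N th1 th2 PI) < enn2real (N th1 th2 P')"
  proof -
    have "N th1 th2 PI < ennreal (enn2real (N th1 th2 P'))" using lt fP by (simp add: ennreal_enn2real_if)
    then show ?thesis using fI by (simp add: less_top)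
  qed
  then have strict: "risk \<alpha> th1 th2 (delta (Phi_I \<alpha> \<Phi>)) < risk \<alpha> th1 th2 (delta \<Phi>)"
    using riskI[OF th] riskP[OF th] by linarith
  show ?thesis using part1 strict th by blast
qed



end
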